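(* (a) For $n\ge 0$: $a(n)=a(n+1)$ if and only if $n\in\{\lfloor \varphi^2 k\rfloor-1 : k\ge 1\}$. (b) For $n\ge 0$: $a(n)\ne a(n+1)$ if and only if $n\in\{\lfloor \varphi k+1/\varphi\rfloor : k\ge 0\}$. (c) For $n\ge 1$: $a(n)\notin\{a(n-1),a(n+1)\}$ if and only if $n\in\{\lfloor \varphi\lfloor \varphi^2 k\rfloor\rfloor : k\ge 1\}$.
   Context: $\varphi=(1+\sqrt5)/2$. Let $(F_n)_{n\ge 0}$ be the Fibonacci numbers: $F_0=0$, $F_1=1$, $F_n=F_{n-1}+F_{n-2}$ for $n\ge 2$. Define $(a(n))_{n\ge 0}$ (OEIS A105774) by $a(0)=0$, $a(1)=1$, and for $n\ge 2$, $a(n)=F_{j+1}-a(n-F_j)$, where $j\ge 2$ is the unique index with $F_j<n\le F_{j+1}$. *)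

theory Defs
  imports Complex_Main "HOL-Number_Theory.Fib"
begin

definition phi :: real where "phi = (1 + sqrt 5) / 2"

definition fibidx :: "nat \<Rightarrow> nat" where
  "fibidx n = (THE j. 2 \<le> j \<and> fib j < n \<and> n \<le> fib (j + 1))"

lemma fib_ge_self: "n \<le> fib (n + 1)"
proof (induction n rule: nat_less_induct)
  case (1 n)
  show ?case
  proof (cases "n < 2")
    case True then show ?thesis by (cases n) auto
  next
    case False
    then obtain m where m: "n = m + 2" by (metis add.commute le_Suc_ex not_less)
    have "m + 1 \<le> fib (m + 2)" proof -
      have "m + 1 < n" using m by simp
      then have "m + 1 \<le> fib (m + 1 + 1)" using 1 by blast
      then show ?thesis by (simp add: add.assoc)
    qed
    moreover have "1 \<le> fib (m + 1)" using fib_neq_0_nat by (simp add: Suc_leI)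
    ultimately show ?thesis using m fib_plus_2[of "m+1"] by simp
  qed
qed

lemma fibidx_exists:
  assumes "2 \<le> n" shows "\<exists>j. 2 \<le> j \<and> fib j < n \<and> n \<le> fib (j + 1)"
proof -
  define k where "k = (LEAST k. n \<le> fib (k + 1))"
  have hk: "n \<le> fib (k + 1)" unfolding k_def by (rule LeastI[of _ n]) (rule fib_ge_self)
  have lt: "\<And>i. i < k \<Longrightarrow> fib (i + 1) < n" unfolding k_def using not_less_Least by fastforce
  have "k \<ge> 2"
  proof (rule ccontr)
    assume "\<not> 2 \<le> k"
    then have "k \<le> 1" by simp
    then have "fib (k+1) \<le> 1" by (cases k) auto
    then show False using hk assms by simp
  qed
  then obtain i where i: "k = i + 1" by (metis add.commute le_Suc_ex one_add_one add.assoc)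
  have "fib k < n" using lt[of i] i by simp
  then show ?thesis using hk \<open>k \<ge> 2\<close> by blast
qed

lemma fibidx_unique:
  assumes "2 \<le> i" "fib i < n" "n \<le> fib (i + 1)" "2 \<le> j" "fib j < n" "n \<le> fib (j + 1)"
  shows "i = j"
proof (rule ccontr)
  assume "i \<noteq> j"
  then consider "i + 1 \<le> j" | "j + 1 \<le> i" by linarith
  then show False
  proof cases
    case 1 then have "fib (i+1) \<le> fib j" by (rule fib_mono) then show False using assms by simp
  next
    case 2 then have "fib (j+1) \<le> fib i" by (rule fib_mono) then show False using assms by simp
  qed
qed

lemma fibidx_spec:
  assumes "2 \<le> n"
  shows "2 \<le> fibidx n \<and> fib (fibidx n) < n \<and> n \<le> fib (fibidx n + 1)"
proof -
  obtain j where j: "2 \<le> j \<and> fib j < n \<and> n \<le> fib (j + 1)" using fibidx_exists[OF assms] by blast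
  have "fibidx n = j" unfolding fibidx_def
    by (rule the_equality) (use j fibidx_unique in blast)+
  then show ?thesis using j by simp
qed

text \<open>OEIS A105774.\<close>
function a :: "nat \<Rightarrow> int" where
  "a n = (if n = 0 then 0 else if n = 1 then 1
          else int (fib (fibidx n + 1)) - a (n - fib (fibidx n)))"
  by auto
termination
proof (relation "measure id")
  fix n :: nat assume "\<not> n = 0" "\<not> n = 1"
  then have "2 \<le> n" by simp
  from fibidx_spec[OF this] have "fib (fibidx n) > 0" using fib_neq_0_nat by simp
  then show "(n - fib (fibidx n), n) \<in> measure id" using \<open>2 \<le> n\<close> by simp
qed simp

end

theory Submission
  imports Defs
begin

lemma phi_sq: "phi^2 = phi + 1"
  unfolding phi_def by (simp add: power2_eq_square field_simps)

lemma phi_bounds: "1.6 < phi" "phi < 1.7"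
proof -
  have "sqrt 5 > 2.2" by (rule real_less_rsqrt) (simp add: power2_eq_square)
  moreover have "sqrt 5 < sqrt (2.4^2)" by (subst real_sqrt_less_iff) (simp add: power2_eq_square)
  then have "sqrt 5 < 2.4" by simp
  ultimately show "1.6 < phi" "phi < 1.7" unfolding phi_def by auto
qed

lemma delta: "real (fib k) * phi - real (fib (Suc k)) = - ((1 - phi) ^ k)"
proof (induction k rule: fib.induct)
  case 1 then show ?case by simp
next
  case 2 then show ?case unfolding phi_def by simp
next
  case (3 n)
  have "real (fib (Suc (Suc n))) * phi - real (fib (Suc (Suc (Suc n))))
     = (real (fib (Suc n)) * phi - real (fib (Suc (Suc n)))) + (real (fib n) * phi - real (fib (Suc n)))"
    by (simp add: algebra_simps)
  also have "\<dots> = - ((1 - phi) ^ Suc n) - (1-phi) ^ n" using 3 by simp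
  also have "\<dots> = - ((1 - phi) ^ n * (2 - phi))" by (simp add: algebra_simps)
  also have "2 - phi = (1 - phi) ^ 2" using phi_sq by (simp add: power2_eq_square algebra_simps)
  finally show ?case by (simp add: power_add[symmetric])
qed

lemma lattice: "\<exists>a b::int. int y = a * int (fib (Suc i)) + b * int (fib i) \<and> q = a * int (fib (Suc (Suc i))) + b * int (fib (Suc i))"
proof (induction i arbitrary: y q)
  case 0
  show ?case by (rule exI[of _ "int y"], rule exI[of _ "q - int y"]) simp
next
  case (Suc i)
  then obtain a b where ab: "int y = a * int (fib (Suc i)) + b * int (fib i)" "q = a * int (fib (Suc (Suc i))) + b * int (fib (Suc i))" by blast
  show ?case
    by (rule exI[of _ b], rule exI[of _ "a - b"]) (use ab in \<open>simp add: algebra_simps\<close>)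
qed

lemma key_ineq:
  fixes a b :: int and c :: real
  assumes c: "0.6 < c" "c < 0.7"
    and y: "int y = a * int F1 + b * int F0" "0 < y" "int y < int F1 + int F0"
    and ex: "\<not> (a = 1 \<and> b = 0)"
  shows "\<bar>real_of_int b - real_of_int a * c\<bar> > c"
proof -
  consider "a = 0" | "b = 0" "a \<noteq> 0" | "a > 0" "b > 0" | "a < 0" "b < 0" | "a > 0" "b < 0" | "a < 0" "b > 0"
    by linarith
  then show ?thesis
  proof cases
    case 1
    then have "b * int F0 > 0" using y by simp
    then have "b \<ge> 1" by (metis not_le zero_less_mult_pos2 of_nat_0_le_iff order.not_eq_order_implies_strict zero_less_imp_eq_int int_one_le_iff_zero_less mult_le_0_iff)
    then show ?thesis using 1 c by simp
  next
    case 2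
    then have "a * int F1 > 0" using y by simp
    then have "a \<ge> 1" using zero_less_mult_pos2 by (metis of_nat_0_le_iff int_one_le_iff_zero_less mult_le_0_iff not_le)
    then have "a \<ge> 2" using 2 ex by simp
    then have "real_of_int a * c \<ge> 2 * c" using c by (intro mult_right_mono) auto
    then show ?thesis using 2 c by simp
  next
    case 3
    then have "a * int F1 \<ge> int F1" "b * int F0 \<ge> int F0" by (simp_all add: mult_le_cancel_right1)
    then show ?thesis using y by linarith
  next
    case 4
    then have "a * int F1 \<le> 0" "b * int F0 \<le> 0" by (simp_all add: mult_le_0_iff)
    then show ?thesis using y by linarith
  next
    case 5
    then have "real_of_int a * c \<ge> c" using c by (simp add: mult_le_cancel_right1)
    moreover have "real_of_int b \<le> -1" using 5 by simp
    ultimately have "real_of_int b - real_of_int a * c \<le> -1 - c" by linarith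
    then show ?thesis using c by linarith
  next
    case 6
    then have "real_of_int a \<le> -1" by simp
    then have "real_of_int a * c \<le> (-1) * c" using c by (intro mult_right_mono) auto
    moreover have "real_of_int b \<ge> 1" using 6 by simp
    ultimately have "real_of_int b - real_of_int a * c \<ge> 1 + c" by linarith
    then show ?thesis using c by linarith
  qed
qed

lemma approx:
  fixes y :: nat and q :: int
  assumes "0 < y" "y < fib (Suc (Suc i))" "\<not>(y = fib (Suc i) \<and> q = int (fib (Suc (Suc i))))"
  shows "\<bar>real y * phi - real_of_int q\<bar> > (phi - 1) ^ Suc i"
proof -
  obtain a b where ab: "int y = a * int (fib (Suc i)) + b * int (fib i)" "q = a * int (fib (Suc (Suc i))) + b * int (fib (Suc i))"
    using lattice by blast
  have ry: "real y = real_of_int a * real (fib (Suc i)) + real_of_int b * real (fib i)"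
    using arg_cong[OF ab(1), of real_of_int] by simp
  have rq: "real_of_int q = real_of_int a * real (fib (Suc (Suc i))) + real_of_int b * real (fib (Suc i))"
    using arg_cong[OF ab(2), of real_of_int] by simp
  have "real y * phi - real_of_int q = real_of_int a * (real (fib (Suc i)) * phi - real (fib (Suc (Suc i))))
        + real_of_int b * (real (fib i) * phi - real (fib (Suc i)))"
    unfolding ry rq by (simp add: algebra_simps)
  also have "\<dots> = real_of_int a * (- ((1 - phi) ^ Suc i)) + real_of_int b * (- ((1 - phi) ^ i))"
    by (simp only: delta)
  also have "\<dots> = - ((1 - phi) ^ i * (real_of_int b - real_of_int a * (phi - 1)))"
    by (simp add: algebra_simps)
  finally have e: "\<bar>real y * phi - real_of_int q\<bar> = (phi - 1) ^ i * \<bar>real_of_int b - real_of_int a * (phi - 1)\<bar>"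
    using phi_bounds by (simp add: abs_mult power_abs)
  have ex: "\<not> (a = 1 \<and> b = 0)"
  proof
    assume "a = 1 \<and> b = 0"
    then show False using ab assms(3) by simp
  qed
  have yl: "int y < int (fib (Suc i)) + int (fib i)" using assms(2) by simp
  have k: "\<bar>real_of_int b - real_of_int a * (phi - 1)\<bar> > phi - 1"
    by (rule key_ineq[OF _ _ ab(1) assms(1) yl ex]) (use phi_bounds in auto)
  have "(phi - 1) ^ i > 0" using phi_bounds by simp
  then have "(phi - 1) ^ i * (phi - 1) < (phi - 1) ^ i * \<bar>real_of_int b - real_of_int a * (phi - 1)\<bar>"
    using k by (intro mult_strict_left_mono) auto
  then show ?thesis using e by (simp add: algebra_simps)
qed

lemma phi_bounds2: "1.618 < phi" "phi < 1.6181"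
proof -
  have "sqrt 5 > 2.236" by (rule real_less_rsqrt) (simp add: power2_eq_square)
  moreover have "sqrt 5 < sqrt (2.2362^2)" by (subst real_sqrt_less_iff) (simp add: power2_eq_square)
  then have "sqrt 5 < 2.2362" by simp
  ultimately show "1.618 < phi" "phi < 1.6181" unfolding phi_def by auto
qed

lemma phi_inv: "phi * (phi - 1) = 1" using phi_sq by (simp add: power2_eq_square algebra_simps)
lemma phi_D: "(phi + 1) * (2 - phi) = 1" using phi_sq by (simp add: power2_eq_square algebra_simps)
lemma phi_c2: "(phi - 1)^2 = 2 - phi" using phi_sq by (simp add: power2_eq_square algebra_simps)
lemma phi_c3: "(phi - 1)^3 = 2 * phi - 3"
proof -
  have "(phi - 1)^3 = (phi - 1)^2 * (phi - 1)" by (simp add: power_Suc2[symmetric] numeral_3_eq_3)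
  also have "\<dots> = 2 * phi - 3" unfolding phi_c2 using phi_sq by (simp add: power2_eq_square algebra_simps)
  finally show ?thesis .
qed

lemma phi_mul2: "phi * (phi * r) = r + phi * r"
proof -
  have "phi * (phi * r) = (phi ^ 2) * r" by (simp add: power2_eq_square)
  also have "\<dots> = (phi + 1) * r" by (simp add: phi_sq)
  finally show ?thesis by (simp add: algebra_simps)
qed

definition th :: "nat \<Rightarrow> real" where "th x = real x * phi - real_of_int \<lfloor>real x * phi\<rfloor>"

lemma th_bounds: "0 \<le> th x" "th x < 1"
  unfolding th_def by linarith+

lemma x_lt_fib: "1 \<le> x \<Longrightarrow> x < fib (Suc (Suc x))"
proof -
  assume "1 \<le> x"
  then have "fib x \<ge> 1" using fib_neq_0_nat by (simp add: Suc_le_eq)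
  moreover have "x \<le> fib (x + 1)" by (rule fib_ge_self)
  ultimately show ?thesis by simp
qed

lemma irr: assumes "1 \<le> x" shows "real x * phi \<noteq> real_of_int q"
proof -
  have "x < fib (Suc (Suc (Suc x)))" using x_lt_fib[OF assms] fib_mono[of "Suc (Suc x)" "Suc (Suc (Suc x))"] by simp
  moreover have "x \<noteq> fib (Suc (Suc x))" using x_lt_fib[OF assms] by simp
  ultimately have "\<bar>real x * phi - real_of_int q\<bar> > (phi - 1) ^ Suc (Suc x)"
    using assms by (intro approx) auto
  moreover have "(phi - 1) ^ Suc (Suc x) > 0" using phi_bounds by simp
  ultimately show ?thesis by auto
qed

lemma th_pos: "1 \<le> x \<Longrightarrow> 0 < th x"
  using irr[of x "\<lfloor>real x * phi\<rfloor>"] th_bounds[of x] unfolding th_def by linarith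

lemma th_neD: "th x \<noteq> 2 - phi"
proof
  assume h: "th x = 2 - phi"
  have "real (x + 1) * phi = real_of_int (\<lfloor>real x * phi\<rfloor> + 2)"
    using h unfolding th_def by (simp add: algebra_simps)
  moreover have "real (x + 1) * phi \<noteq> real_of_int (\<lfloor>real x * phi\<rfloor> + 2)" by (rule irr) simp
  ultimately show False by contradiction
qed

lemma W2_char:
  assumes "1 \<le> x"
  shows "(\<exists>k::nat. k \<ge> 1 \<and> int x = \<lfloor>phi ^ 2 * real k\<rfloor>) \<longleftrightarrow> th x < 2 - phi"
proof
  assume "\<exists>k::nat. k \<ge> 1 \<and> int x = \<lfloor>phi ^ 2 * real k\<rfloor>"
  then obtain k :: nat where k: "int x = \<lfloor>phi ^ 2 * real k\<rfloor>" by blast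
  have b1: "real x \<le> (phi + 1) * real k" "(phi + 1) * real k < real x + 1"
    using floor_eq_iff[THEN iffD1, OF k[symmetric]] phi_sq by auto
  have D0: "2 - phi > 0" using phi_bounds by simp
  have m: "(phi + 1) * real k * (2 - phi) = real k"
  proof -
    have "(phi + 1) * real k * (2 - phi) = ((phi + 1) * (2 - phi)) * real k" by (simp add: algebra_simps)
    then show ?thesis using phi_D by simp
  qed
  have "real x * (2 - phi) \<le> (phi + 1) * real k * (2 - phi)" using b1(1) D0 by (intro mult_right_mono) auto
  then have l1: "real x * (2 - phi) \<le> real k" using m by simp
  have "(phi + 1) * real k * (2 - phi) < (real x + 1) * (2 - phi)" using b1(2) D0 by (intro mult_strict_right_mono) auto
  then have l2: "real k < (real x + 1) * (2 - phi)" using m by simp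
  define p where "p = \<lfloor>real x * phi\<rfloor>"
  have t: "th x = real x * phi - p" unfolding th_def p_def by simp
  have "2 * int x - int k \<le> p" unfolding p_def le_floor_iff using l1 by (simp add: algebra_simps)
  then have "real_of_int (2 * int x - int k) \<le> real_of_int p" by linarith
  then show "th x < 2 - phi" using l2 t by (simp add: algebra_simps)
next
  assume h: "th x < 2 - phi"
  define p where "p = \<lfloor>real x * phi\<rfloor>"
  have t: "th x = real x * phi - p" unfolding th_def p_def by simp
  have e: "phi ^ 2 * real_of_int (2 * int x - p) = real x + th x * (phi + 1)"
    unfolding t by (simp add: algebra_simps power2_eq_square phi_mul2)
  have "th x * (phi + 1) < (2 - phi) * (phi + 1)" using h phi_bounds by (intro mult_strict_right_mono) auto
  moreover have "(2 - phi) * (phi + 1) = 1" using phi_D by (simp add: mult.commute)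
  ultimately have u: "th x * (phi + 1) < 1" by linarith
  have z: "0 \<le> th x * (phi + 1)" using th_bounds phi_bounds by simp
  have fl: "\<lfloor>phi ^ 2 * real_of_int (2 * int x - p)\<rfloor> = int x"
    unfolding e by (rule floor_unique) (use u z in auto)
  have "phi ^ 2 * real_of_int (2 * int x - p) > 0" unfolding e using z assms by simp
  then have "2 * int x - p > 0" using phi_bounds by (simp add: zero_less_mult_iff)
  then show "\<exists>k::nat. k \<ge> 1 \<and> int x = \<lfloor>phi ^ 2 * real k\<rfloor>"
    using fl by (intro exI[of _ "nat (2 * int x - p)"]) auto
qed

lemma W1_char:
  assumes "1 \<le> x"
  shows "(\<exists>K::nat. K \<ge> 1 \<and> int x = \<lfloor>phi * real K\<rfloor>) \<longleftrightarrow> th x > 2 - phi"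
proof
  assume "\<exists>K::nat. K \<ge> 1 \<and> int x = \<lfloor>phi * real K\<rfloor>"
  then obtain K :: nat where k: "int x = \<lfloor>phi * real K\<rfloor>" by blast
  have b1: "real x \<le> phi * real K" "phi * real K < real x + 1"
    using floor_eq_iff[THEN iffD1, OF k[symmetric]] by auto
  have m: "phi * real K * (phi - 1) = real K"
  proof -
    have "phi * real K * (phi - 1) = (phi * (phi - 1)) * real K" by (simp add: algebra_simps)
    then show ?thesis using phi_inv by simp
  qed
  have D0: "phi - 1 > 0" using phi_bounds by simp
  have "real x * (phi - 1) \<le> phi * real K * (phi - 1)" using b1(1) D0 by (intro mult_right_mono) auto
  then have l1: "real x * (phi - 1) \<le> real K" using m by simp
  have "phi * real K * (phi - 1) < (real x + 1) * (phi - 1)" using b1(2) D0 by (intro mult_strict_right_mono) auto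
  then have l2: "real K < (real x + 1) * (phi - 1)" using m by simp
  define p where "p = \<lfloor>real x * phi\<rfloor>"
  have t: "th x = real x * phi - p" unfolding th_def p_def by simp
  have tp: "th x > 0" using th_pos[OF assms] .
  have "int K - p + int x > 0"
  proof -
    have "real_of_int (int K - p + int x) \<ge> th x" using l1 t by (simp add: algebra_simps)
    then show ?thesis using tp by linarith
  qed
  then have "real_of_int (int K - p + int x) \<ge> 1" by linarith
  then show "th x > 2 - phi" using l2 t by (simp add: algebra_simps)
next
  assume h: "th x > 2 - phi"
  define p where "p = \<lfloor>real x * phi\<rfloor>"
  have t: "th x = real x * phi - p" unfolding th_def p_def by simp
  have e: "phi * real_of_int (p - int x + 1) = real x + phi * (1 - th x)"
    unfolding t by (simp add: algebra_simps power2_eq_square phi_mul2)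
  have "phi * (1 - th x) < phi * (phi - 1)" using h phi_bounds by (intro mult_strict_left_mono) auto
  then have u: "phi * (1 - th x) < 1" using phi_inv by simp
  have z: "0 \<le> phi * (1 - th x)" using th_bounds[of x] phi_bounds by simp
  have fl: "\<lfloor>phi * real_of_int (p - int x + 1)\<rfloor> = int x"
    unfolding e by (rule floor_unique) (use u z in auto)
  have "phi * real_of_int (p - int x + 1) > 0" unfolding e using z assms by simp
  then have "p - int x + 1 > 0" using phi_bounds by (simp add: zero_less_mult_iff)
  then show "\<exists>K::nat. K \<ge> 1 \<and> int x = \<lfloor>phi * real K\<rfloor>"
    using fl by (intro exI[of _ "nat (p - int x + 1)"]) auto
qed

lemma abs_delta: "\<bar>real (fib k) * phi - real (fib (Suc k))\<bar> = (phi - 1) ^ k"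
proof -
  have "\<bar>1 - phi\<bar> = phi - 1" using phi_bounds by simp
  then show ?thesis unfolding delta by (simp add: power_abs)
qed

lemma shift:
  assumes "0 < x" "x + 1 < fib (Suc (Suc i))" "x \<noteq> fib (Suc i)"
  shows "th (x + fib (Suc i)) < 2 - phi \<longleftrightarrow> th x < 2 - phi"
proof -
  define p where "p = \<lfloor>real x * phi\<rfloor>"
  define s where "s = real (fib (Suc i)) * phi - real (fib (Suc (Suc i)))"
  have sa: "\<bar>s\<bar> = (phi - 1) ^ Suc i" unfolding s_def by (rule abs_delta)
  have t: "th x = real x * phi - p" unfolding th_def p_def by simp
  have h1: "\<bar>real x * phi - real_of_int p\<bar> > (phi - 1) ^ Suc i"
    by (rule approx) (use assms in auto)
  have h2: "\<bar>real x * phi - real_of_int (p + 1)\<bar> > (phi - 1) ^ Suc i"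
    by (rule approx) (use assms in auto)
  have tb: "0 \<le> th x" "th x < 1" by (rule th_bounds)+
  have a1: "th x > \<bar>s\<bar>" using h1 t tb sa by simp
  have a2: "1 - th x > \<bar>s\<bar>" using h2 t tb sa by (simp add: abs_if split: if_split_asm)
  have sb: "- \<bar>s\<bar> \<le> s" "s \<le> \<bar>s\<bar>" by auto
  have e: "real (x + fib (Suc i)) * phi = real_of_int (p + int (fib (Suc (Suc i)))) + (th x + s)"
    by (simp add: t s_def algebra_simps)
  have fl: "\<lfloor>real (x + fib (Suc i)) * phi\<rfloor> = p + int (fib (Suc (Suc i)))"
    unfolding e by (rule floor_unique) (use a1 a2 sb in linarith)+
  have th': "th (x + fib (Suc i)) = th x + s"
  proof -
    have "th (x + fib (Suc i)) = real (x + fib (Suc i)) * phi - real_of_int \<lfloor>real (x + fib (Suc i)) * phi\<rfloor>"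
      by (simp only: th_def)
    also have "\<dots> = th x + s" unfolding fl unfolding e by simp
    finally show ?thesis .
  qed
  have ed: "real (x + 1) * phi - real_of_int (p + 2) = th x - (2 - phi)"
    by (simp add: t algebra_simps)
  have spos: "\<bar>s\<bar> > 0" unfolding sa using phi_bounds by simp
  show ?thesis
  proof (cases "x + 1 = fib (Suc i) \<and> p + 2 = int (fib (Suc (Suc i)))")
    case True
    then have "th x - (2 - phi) = s" using ed unfolding s_def by simp
    then show ?thesis unfolding th' using spos by (simp add: abs_if split: if_split_asm)
  next
    case False
    have "\<bar>real (x + 1) * phi - real_of_int (p + 2)\<bar> > (phi - 1) ^ Suc i"
      by (rule approx) (use assms False in auto)
    then have "\<bar>th x - (2 - phi)\<bar> > \<bar>s\<bar>" using ed sa by simp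
    then show ?thesis unfolding th' by (simp add: abs_if split: if_split_asm)
  qed
qed

lemma top:
  assumes "1 \<le> i"
  shows "th (fib (Suc (Suc i)) + 1) > 2 - phi"
proof -
  define s where "s = real (fib (Suc (Suc i))) * phi - real (fib (Suc (Suc (Suc i))))"
  have c3: "(phi - 1) ^ 3 = 2 * phi - 3" by (rule phi_c3)
  have sb: "s > - (2 * phi - 3) \<and> \<bar>s\<bar> \<le> 2 * phi - 3"
  proof (cases "i = 1")
    case True
    have "s = - ((1 - phi) ^ 3)" unfolding s_def True using delta[of 3] by (simp add: numeral_3_eq_3)
    also have "(1 - phi) ^ 3 = - ((phi - 1) ^ 3)" by (simp add: power_minus_odd[symmetric])
    finally have "s = 2 * phi - 3" using c3 by simp
    then show ?thesis using phi_bounds by simp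
  next
    case False
    then have i2: "i \<ge> 2" using assms by simp
    have sa: "\<bar>s\<bar> = (phi - 1) ^ (Suc (Suc i))" unfolding s_def by (rule abs_delta)
    have "(phi - 1) ^ (Suc (Suc i)) \<le> (phi - 1) ^ 4"
      using i2 phi_bounds by (intro power_decreasing) auto
    also have "(phi - 1) ^ 4 = (phi - 1) ^ 3 * (phi - 1)" by (simp add: numeral_eq_Suc)
    also have "\<dots> < (phi - 1) ^ 3" using phi_bounds by (simp add: c3)
    finally have "\<bar>s\<bar> < 2 * phi - 3" using sa c3 by simp
    then show ?thesis by auto
  qed
  have e: "real (fib (Suc (Suc i)) + 1) * phi = real_of_int (int (fib (Suc (Suc (Suc i)))) + 1) + (phi - 1 + s)"
    by (simp add: s_def algebra_simps)
  have b: "0 \<le> phi - 1 + s" "phi - 1 + s < 1" using sb phi_bounds2 abs_ge_self[of s] by auto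
  have fl: "\<lfloor>real (fib (Suc (Suc i)) + 1) * phi\<rfloor> = int (fib (Suc (Suc (Suc i)))) + 1"
    unfolding e by (rule floor_unique) (use b in auto)
  have "th (fib (Suc (Suc i)) + 1) = phi - 1 + s"
    unfolding th_def fl unfolding e by simp
  then show ?thesis using sb by simp
qed

lemma th1: "th 1 = phi - 1"
proof -
  have "\<lfloor>phi\<rfloor> = 1" by (rule floor_unique) (use phi_bounds in auto)
  then show ?thesis unfolding th_def by simp
qed

lemma th2: "th 2 = 2 * phi - 3"
proof -
  have "\<lfloor>2 * phi\<rfloor> = 3" by (rule floor_unique) (use phi_bounds in auto)
  then show ?thesis unfolding th_def by simp
qed

lemma th_succ:
  assumes "th n > 2 - phi"
  shows "th (n + 1) = th n + phi - 2"
proof -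
  define p where "p = \<lfloor>real n * phi\<rfloor>"
  have t: "th n = real n * phi - p" unfolding th_def p_def by simp
  have e: "real (n + 1) * phi = real_of_int (p + 2) + (th n + phi - 2)" by (simp add: t algebra_simps)
  have b: "0 \<le> th n + phi - 2" "th n + phi - 2 < 1" using assms th_bounds[of n] phi_bounds by auto
  have fl: "\<lfloor>real (n + 1) * phi\<rfloor> = p + 2" unfolding e by (rule floor_unique) (use b in auto)
  show ?thesis unfolding th_def[of "n+1"] fl unfolding e by simp
qed

lemma th_comp:
  assumes "1 \<le> m" "int n = \<lfloor>real m * phi\<rfloor>"
  shows "th n = 1 - th m * (phi - 1)"
proof -
  have t: "th m = real m * phi - real n" unfolding th_def using arg_cong[OF assms(2), of real_of_int] by simp
  have tp: "0 < th m" "th m < 1" using th_pos[OF assms(1)] th_bounds[of m] by auto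
  have e: "real n * phi = real_of_int (int m + int n - 1) + (1 - th m * (phi - 1))"
  proof -
    have "real n = real m * phi - th m" using t by simp
    then have "real n * phi = (real m * phi - th m) * phi" by simp
    also have "\<dots> = real m * (phi * phi) - th m * phi" by (simp add: algebra_simps)
    also have "phi * phi = phi + 1" using phi_sq by (simp add: power2_eq_square)
    finally have A: "real n * phi = real m * phi + real m - th m * phi" by (simp add: algebra_simps)
    have B: "real_of_int (int m + int n - 1) + (1 - th m * (phi - 1)) = real m + real n - th m * phi + th m"
      by (simp add: algebra_simps)
    show ?thesis using A B t by linarith
  qed
  have "th m * (phi - 1) < 1 * 1" using tp phi_bounds by (intro mult_strict_mono) auto
  moreover have "th m * (phi - 1) > 0" using tp phi_bounds by simp
  ultimately have b: "0 \<le> 1 - th m * (phi - 1)" "1 - th m * (phi - 1) < 1" by auto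
  have fl: "\<lfloor>real n * phi\<rfloor> = int m + int n - 1" unfolding e by (rule floor_unique) (use b in auto)
  show ?thesis unfolding th_def[of n] fl unfolding e by simp
qed

declare a.simps[simp del]

lemma fibidx_eq: assumes "2 \<le> j" "fib j < n" "n \<le> fib (j+1)" shows "fibidx n = j"
proof -
  have "fib j \<ge> 1" using assms(1) fib_neq_0_nat[of j] by simp
  then have "2 \<le> n" using assms by simp
  from fibidx_spec[OF this] show ?thesis using fibidx_unique assms by blast
qed

lemma a_rec: "2 \<le> n \<Longrightarrow> a n = int (fib (fibidx n + 1)) - a (n - fib (fibidx n))"
  by (subst a.simps) simp

lemma a0: "a 0 = 0" by (subst a.simps) simp
lemma a1: "a 1 = 1" by (subst a.simps) simp
lemma a2: "a 2 = 1"
proof -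
  have "fibidx 2 = 2" by (rule fibidx_eq) (auto simp: numeral_eq_Suc)
  then show ?thesis using a_rec[of 2] a1 by (simp add: numeral_eq_Suc)
qed

lemma a_bound: "1 \<le> n \<Longrightarrow> 1 \<le> a n \<and> (\<forall>k. n \<le> fib k \<longrightarrow> a n \<le> int (fib k)) \<and> (2 \<le> n \<longrightarrow> a n < int (fib (fibidx n + 1)))"
proof (induction n rule: less_induct)
  case (less n)
  show ?case
  proof (cases "n = 1")
    case True
    then show ?thesis using a1 by auto
  next
    case False
    then have n2: "2 \<le> n" using less.prems by simp
    define J where "J = fibidx n"
    have sp: "2 \<le> J" "fib J < n" "n \<le> fib (J + 1)" using fibidx_spec[OF n2] unfolding J_def by auto
    obtain i where i: "J = Suc (Suc i)" using sp(1) by (metis add_2_eq_Suc le_Suc_ex)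
    define m where "m = n - fib J"
    have m1: "1 \<le> m" "m < n" using sp fib_neq_0_nat[of J] unfolding m_def by auto
    have mle: "m \<le> fib (Suc i)" using sp unfolding m_def i by simp
    from less.IH[OF m1(2) m1(1)] have ih: "1 \<le> a m" "a m \<le> int (fib (Suc i))" using mle by auto
    have an: "a n = int (fib (J + 1)) - a m" using a_rec[OF n2] unfolding m_def J_def by simp
    have fJ: "fib (J + 1) = fib J + fib (Suc i)" "fib J \<ge> 1" using i fib_neq_0_nat[of J] by auto
    have lo: "a n \<ge> 1" using an ih fJ by simp
    have hi: "a n < int (fib (J + 1))" using an ih by simp
    have gen: "\<forall>k. n \<le> fib k \<longrightarrow> a n \<le> int (fib k)"
    proof (intro allI impI)
      fix k assume "n \<le> fib k"
      then have "\<not> k \<le> J" using sp fib_mono[of k J] by auto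
      then have "fib (J + 1) \<le> fib k" by (intro fib_mono) simp
      then show "a n \<le> int (fib k)" using hi by simp
    qed
    show ?thesis using lo hi gen unfolding J_def by auto
  qed
qed

lemma E_int:
  assumes "2 \<le> n" "n < fib (fibidx n + 1)"
  shows "(a n = a (n+1)) = (a (n - fib (fibidx n)) = a (n - fib (fibidx n) + 1))"
proof -
  define J where "J = fibidx n"
  have sp: "2 \<le> J" "fib J < n" "n \<le> fib (J + 1)" using fibidx_spec[OF assms(1)] unfolding J_def by auto
  have f1: "fibidx (n + 1) = J" by (rule fibidx_eq) (use sp assms(2) J_def in auto)
  have "a (n + 1) = int (fib (J + 1)) - a (n + 1 - fib J)" using a_rec[of "n+1"] assms f1 by simp
  moreover have "n + 1 - fib J = n - fib J + 1" using sp by simp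
  moreover have "a n = int (fib (J + 1)) - a (n - fib J)" using a_rec[OF assms(1)] J_def by simp
  ultimately show ?thesis unfolding J_def by auto
qed

lemma E_top:
  assumes "2 \<le> n" "n = fib (fibidx n + 1)"
  shows "a n \<noteq> a (n+1)"
proof -
  define J where "J = fibidx n"
  have sp: "2 \<le> J" "fib J < n" "n \<le> fib (J + 1)" using fibidx_spec[OF assms(1)] unfolding J_def by auto
  have fJ: "fib (J + 2) = fib (J + 1) + fib J" "fib J \<ge> 1" using fib_plus_2[of J] fib_neq_0_nat[of J] sp by auto
  have f1: "fibidx (n + 1) = J + 1" by (rule fibidx_eq) (use sp assms(2) J_def fJ in auto)
  have "a (n + 1) = int (fib (J + 2)) - a (n + 1 - fib (J + 1))" using a_rec[of "n+1"] assms f1 by simp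
  also have "n + 1 - fib (J + 1) = 1" using assms(2) J_def by simp
  finally have "a (n + 1) = int (fib (J + 2)) - 1" using a1 by simp
  moreover have "a n < int (fib (J + 1))" using a_bound[of n] assms J_def by simp
  ultimately show ?thesis using fJ by simp
qed

lemma P_int:
  assumes "2 \<le> n" "n < fib (fibidx n + 1)"
  shows "(th (n + 1) < 2 - phi) = (th (n - fib (fibidx n) + 1) < 2 - phi)"
proof -
  define J where "J = fibidx n"
  have sp: "2 \<le> J" "fib J < n" "n \<le> fib (J + 1)" using fibidx_spec[OF assms(1)] unfolding J_def by auto
  obtain k where k: "J = Suc (Suc k)" using sp(1) by (metis add_2_eq_Suc le_Suc_ex)
  define x where "x = n - fib J + 1"
  have x2: "2 \<le> x" using sp unfolding x_def by simp
  have nl: "n < fib (J + 1)" using assms(2) J_def by simp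
  have xle: "x \<le> fib (Suc k)" using sp nl unfolding x_def k by simp
  have f2: "fib (Suc k) \<ge> 2" using x2 xle by simp
  have f3: "fib (Suc (Suc k)) \<ge> fib (Suc k)" by (rule fib_Suc_mono)
  have c1: "x + 1 < fib (Suc (Suc (Suc k)))" using xle f2 f3 by simp
  have c2: "x \<noteq> fib (Suc (Suc k))"
  proof
    assume h: "x = fib (Suc (Suc k))"
    then have "fib k = 0" using xle by simp
    then have "k = 0" using fib_neq_0_nat[of k] by (cases k) auto
    then show False using xle x2 by simp
  qed
  have sh: "th (x + fib (Suc (Suc k))) < 2 - phi \<longleftrightarrow> th x < 2 - phi"
    by (rule shift) (use x2 c1 c2 in auto)
  have "x + fib (Suc (Suc k)) = n + 1" using sp unfolding x_def k by simp
  then show ?thesis using sh unfolding x_def J_def[symmetric] by simp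
qed

lemma P_top:
  assumes "2 \<le> n" "n = fib (fibidx n + 1)"
  shows "\<not> th (n + 1) < 2 - phi"
proof -
  define J where "J = fibidx n"
  have sp: "2 \<le> J" using fibidx_spec[OF assms(1)] unfolding J_def by auto
  obtain i where i: "J = Suc (Suc i)" using sp(1) by (metis add_2_eq_Suc le_Suc_ex)
  have "th (fib (Suc (Suc (Suc i))) + 1) > 2 - phi" by (rule top) simp
  then show ?thesis using assms(2) unfolding J_def[symmetric] i by simp
qed

lemma main: "a n = a (n+1) \<longleftrightarrow> th (n+1) < 2 - phi"
proof (induction n rule: less_induct)
  case (less n)
  consider "n = 0" | "n = 1" | "2 \<le> n" by linarith
  then show ?case
  proof cases
    case 1
    then show ?thesis using a0 a1 th1 phi_bounds by simp
  next
    case 2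
    have "a (n+1) = 1" "th (n+1) = 2*phi - 3" using 2 a2 th2 by (simp_all add: numeral_2_eq_2)
    then show ?thesis using a1 2 phi_bounds2 by simp
  next
    case 3
    define J where "J = fibidx n"
    have sp: "2 \<le> J" "fib J < n" "n \<le> fib (J + 1)" using fibidx_spec[OF 3] unfolding J_def by auto
    show ?thesis
    proof (cases "n < fib (J + 1)")
      case True
      have "n - fib J < n" using sp fib_neq_0_nat[of J] by simp
      then show ?thesis using less.IH[of "n - fib J"] E_int[OF 3] P_int[OF 3] True J_def by simp
    next
      case False
      then have "n = fib (fibidx n + 1)" using sp J_def by simp
      then show ?thesis using E_top[OF 3] P_top[OF 3] by simp
    qed
  qed
qed

lemma partA: "a n = a (n + 1) \<longleftrightarrow> (\<exists>k::nat. k \<ge> 1 \<and> int n = \<lfloor>phi ^ 2 * real k\<rfloor> - 1)"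
proof -
  have "(\<exists>k::nat. k \<ge> 1 \<and> int n = \<lfloor>phi ^ 2 * real k\<rfloor> - 1) \<longleftrightarrow> (\<exists>k::nat. k \<ge> 1 \<and> int (n + 1) = \<lfloor>phi ^ 2 * real k\<rfloor>)"
    by auto
  then show ?thesis using main[of n] W2_char[of "n+1"] by simp
qed

lemma flL: "\<lfloor>phi * real k + 1 / phi\<rfloor> = \<lfloor>phi * real (k + 1)\<rfloor> - 1"
proof -
  have "1 / phi = phi - 1" using phi_inv phi_bounds by (simp add: field_simps)
  then have "phi * real k + 1 / phi = phi * real (k + 1) - 1" by (simp add: algebra_simps)
  then show ?thesis by simp
qed

lemma partB: "a n \<noteq> a (n + 1) \<longleftrightarrow> (\<exists>k::nat. int n = \<lfloor>phi * real k + 1 / phi\<rfloor>)"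
proof -
  have "a n \<noteq> a (n + 1) \<longleftrightarrow> th (n + 1) > 2 - phi" using main[of n] th_neD[of "n+1"] by auto
  also have "\<dots> \<longleftrightarrow> (\<exists>K::nat. K \<ge> 1 \<and> int (n + 1) = \<lfloor>phi * real K\<rfloor>)" using W1_char[of "n+1"] by simp
  also have "\<dots> \<longleftrightarrow> (\<exists>k::nat. int n = \<lfloor>phi * real k + 1 / phi\<rfloor>)"
  proof
    assume "\<exists>K::nat. K \<ge> 1 \<and> int (n + 1) = \<lfloor>phi * real K\<rfloor>"
    then obtain K :: nat where K: "K \<ge> 1" "int (n + 1) = \<lfloor>phi * real K\<rfloor>" by blast
    then have "K - 1 + 1 = K" by simp
    then have "int n = \<lfloor>phi * real (K - 1) + 1 / phi\<rfloor>" using K(2) flL[of "K - 1"] by simp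
    then show "\<exists>k::nat. int n = \<lfloor>phi * real k + 1 / phi\<rfloor>" by blast
  next
    assume "\<exists>k::nat. int n = \<lfloor>phi * real k + 1 / phi\<rfloor>"
    then obtain k :: nat where k: "int n = \<lfloor>phi * real k + 1 / phi\<rfloor>" by blast
    then have "int (n + 1) = \<lfloor>phi * real (k + 1)\<rfloor>" using flL[of k] by simp
    then show "\<exists>K::nat. K \<ge> 1 \<and> int (n + 1) = \<lfloor>phi * real K\<rfloor>" by (intro exI[of _ "k+1"]) simp
  qed
  finally show ?thesis .
qed

lemma partC:
  assumes n1: "1 \<le> n"
  shows "a n \<notin> {a (n - 1), a (n + 1)} \<longleftrightarrow>
            (\<exists>k::nat. k \<ge> 1 \<and> int n = \<lfloor>phi * real_of_int \<lfloor>phi ^ 2 * real k\<rfloor>\<rfloor>)"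
proof -
  have "a (n - 1) = a n \<longleftrightarrow> th n < 2 - phi" using main[of "n-1"] n1 by simp
  then have "a n \<notin> {a (n - 1), a (n + 1)} \<longleftrightarrow> th n > 2 - phi \<and> th (n + 1) > 2 - phi"
    using main[of n] th_neD[of n] th_neD[of "n+1"] by auto
  also have "\<dots> \<longleftrightarrow> th n > 4 - 2 * phi"
  proof
    assume h: "th n > 2 - phi \<and> th (n + 1) > 2 - phi"
    then show "th n > 4 - 2 * phi" using th_succ[of n] by simp
  next
    assume h: "th n > 4 - 2 * phi"
    then have "th n > 2 - phi" using phi_bounds by simp
    then show "th n > 2 - phi \<and> th (n + 1) > 2 - phi" using th_succ[of n] h by simp
  qed
  also have "\<dots> \<longleftrightarrow> (\<exists>k::nat. k \<ge> 1 \<and> int n = \<lfloor>phi * real_of_int \<lfloor>phi ^ 2 * real k\<rfloor>\<rfloor>)"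
  proof
    assume h: "th n > 4 - 2 * phi"
    then have "th n > 2 - phi" using phi_bounds by simp
    then obtain K :: nat where K: "K \<ge> 1" "int n = \<lfloor>phi * real K\<rfloor>" using W1_char[OF n1] by blast
    have tc: "th n = 1 - th K * (phi - 1)" by (rule th_comp) (use K in \<open>auto simp: mult.commute\<close>)
    have "th K * (phi - 1) < (2 - phi) * (phi - 1)"
    proof -
      have "(2 - phi) * (phi - 1) = 2 * phi - 3" using phi_sq by (simp add: power2_eq_square algebra_simps)
      then show ?thesis using h tc by simp
    qed
    then have "th K < 2 - phi" using phi_bounds by (simp add: mult_less_cancel_right)
    then obtain k :: nat where k: "k \<ge> 1" "int K = \<lfloor>phi ^ 2 * real k\<rfloor>" using W2_char[of K] K(1) by blast
    have "real_of_int \<lfloor>phi ^ 2 * real k\<rfloor> = real K" using arg_cong[OF k(2), of real_of_int] by simp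
    then show "\<exists>k::nat. k \<ge> 1 \<and> int n = \<lfloor>phi * real_of_int \<lfloor>phi ^ 2 * real k\<rfloor>\<rfloor>"
      using K(2) k(1) by auto
  next
    assume "\<exists>k::nat. k \<ge> 1 \<and> int n = \<lfloor>phi * real_of_int \<lfloor>phi ^ 2 * real k\<rfloor>\<rfloor>"
    then obtain k :: nat where k: "k \<ge> 1" "int n = \<lfloor>phi * real_of_int \<lfloor>phi ^ 2 * real k\<rfloor>\<rfloor>" by blast
    define M where "M = \<lfloor>phi ^ 2 * real k\<rfloor>"
    have "phi ^ 2 * real k \<ge> 1 * 1" using k(1) phi_bounds phi_sq by (intro mult_mono) auto
    then have M1: "M \<ge> 1" unfolding M_def by (simp add: le_floor_iff)
    define K where "K = nat M"
    have KM: "real K = real_of_int M" "int K = M" using M1 unfolding K_def by auto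
    have K1: "K \<ge> 1" using M1 unfolding K_def by simp
    have "th K < 2 - phi" using W2_char[OF K1] k(1) KM(2) unfolding M_def by blast
    then have "th K * (phi - 1) < (2 - phi) * (phi - 1)" using phi_bounds by (intro mult_strict_right_mono) auto
    moreover have "(2 - phi) * (phi - 1) = 2 * phi - 3" using phi_sq by (simp add: power2_eq_square algebra_simps)
    moreover have "th n = 1 - th K * (phi - 1)"
    proof (rule th_comp[OF K1])
      have "int n = \<lfloor>phi * real_of_int M\<rfloor>" using k(2) unfolding M_def .
      then show "int n = \<lfloor>real K * phi\<rfloor>" using KM(1) by (simp add: mult.commute)
    qed
    ultimately show "th n > 4 - 2 * phi" by simp
  qed
  finally show ?thesis .
qed

theorem proposition9:
  shows "(\<forall>n::nat. a n = a (n + 1) \<longleftrightarrow>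
            (\<exists>k::nat. k \<ge> 1 \<and> int n = \<lfloor>phi ^ 2 * real k\<rfloor> - 1))
       \<and> (\<forall>n::nat. a n \<noteq> a (n + 1) \<longleftrightarrow>
            (\<exists>k::nat. int n = \<lfloor>phi * real k + 1 / phi\<rfloor>))
       \<and> (\<forall>n::nat. n \<ge> 1 \<longrightarrow>
            (a n \<notin> {a (n - 1), a (n + 1)} \<longleftrightarrow>
            (\<exists>k::nat. k \<ge> 1 \<and> int n = \<lfloor>phi * real_of_int \<lfloor>phi ^ 2 * real k\<rfloor>\<rfloor>)))"
  using partA partB partC by blast

end
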